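(* Let $\mathbb{k}$ be a commutative ring, $M$ a $\mathbb{k}$-module with a descending filtration by $\mathbb{k}$-submodules $M=M_0\supseteq M_1\supseteq M_2\supseteq\cdots$, $G^{(1)}\subseteq GL^{(1)}_{\mathbb{k}}(M)$ a subgroup and $T\subseteq \mathrm{End}^{(1)}_{\mathbb{k}}(M)$ a $\mathbb{k}$-submodule. Let $i\ge 1$ and suppose that the pair $(T^{(i)},G^{(i)})$ is of pointwise Lie type, i.e.: (a) for every $\xi\in T^{(i)}$ and every $z\in M$ there exists $g\in G^{(i)}$ such that, if $\mathrm{ord}(\xi(z))<\infty$, then $\mathrm{ord}((g-\mathrm{Id}-\xi)(z))>\mathrm{ord}(\xi(z))$; (b) for every $g\in G^{(i)}$ and every $z\in M$ there exists $\xi\in T^{(i)}$ such that, if $\mathrm{ord}((g-\mathrm{Id})(z))<\infty$, then $\mathrm{ord}((g-\mathrm{Id}-\xi)(z))>\mathrm{ord}((g-\mathrm{Id})(z))$. Then for every $z\in M$ and every integer $N\ge0$: $$\overline{T^{(i)}(z)}\supseteq M_{N+1}\quad\Longleftrightarrow\quad \overline{G^{(i)}z}\supseteq \{z\}+M_{N+1}.$$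
   Context: For $z\in M$, $\mathrm{ord}(z)=\sup\{j: z\in M_j\}$ (equal to $\infty$ if $z\in\bigcap_j M_j$). For $i\ge0$, $\mathrm{End}^{(i)}_{\mathbb{k}}(M)=\{\phi\in \mathrm{End}_{\mathbb{k}}(M): \phi(M_j)\subseteq M_{j+i}\ \forall j\ge0\}$. $GL^{(0)}_{\mathbb{k}}(M)$ is the group of $\mathbb{k}$-linear automorphisms $g$ of $M$ with $g(M_j)\subseteq M_j$ and $g^{-1}(M_j)\subseteq M_j$ for all $j$; for $i\ge1$, $GL^{(i)}_{\mathbb{k}}(M)=\{g\in GL^{(0)}_{\mathbb{k}}(M): g-\mathrm{Id},\ g^{-1}-\mathrm{Id}\in \mathrm{End}^{(i)}_{\mathbb{k}}(M)\}$. For $i\ge1$ put $G^{(i)}=G^{(1)}\cap GL^{(i)}_{\mathbb{k}}(M)$ and $T^{(i)}=T\cap \mathrm{End}^{(i)}_{\mathbb{k}}(M)$. For $z\in M$, $T^{(i)}(z)=\{\xi(z):\xi\in T^{(i)}\}$ and $G^{(i)}z=\{g(z):g\in G^{(i)}\}$. For a subset $X\subseteq M$, its closure in the filtration topology is $\overline{X}=\bigcap_{j\ge1}(X+M_j)$. *)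

theory Defs
  imports Main "HOL-Library.Extended_Nat"
begin

definition filtration :: "('k::comm_ring_1 \<Rightarrow> 'm::ab_group_add \<Rightarrow> 'm) \<Rightarrow> (nat \<Rightarrow> 'm set) \<Rightarrow> bool" where
  "filtration sc Mf \<longleftrightarrow> (\<forall>j. module.subspace sc (Mf j)) \<and> Mf 0 = UNIV \<and> (\<forall>j. Mf (Suc j) \<subseteq> Mf j)"

definition ord :: "(nat \<Rightarrow> 'm set) \<Rightarrow> 'm \<Rightarrow> enat" where
  "ord Mf z = Sup (enat ` {j. z \<in> Mf j})"

definition End_k :: "('k::comm_ring_1 \<Rightarrow> 'm::ab_group_add \<Rightarrow> 'm) \<Rightarrow> ('m \<Rightarrow> 'm) set" where
  "End_k sc = {f. module_hom sc sc f}"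

definition End_i :: "('k::comm_ring_1 \<Rightarrow> 'm::ab_group_add \<Rightarrow> 'm) \<Rightarrow> (nat \<Rightarrow> 'm set) \<Rightarrow> nat \<Rightarrow> ('m \<Rightarrow> 'm) set" where
  "End_i sc Mf i = {\<phi> \<in> End_k sc. \<forall>j. \<phi> ` Mf j \<subseteq> Mf (j + i)}"

definition GL0 :: "('k::comm_ring_1 \<Rightarrow> 'm::ab_group_add \<Rightarrow> 'm) \<Rightarrow> (nat \<Rightarrow> 'm set) \<Rightarrow> ('m \<Rightarrow> 'm) set" where
  "GL0 sc Mf = {g. bij g \<and> module_hom sc sc g \<and> (\<forall>j. g ` Mf j \<subseteq> Mf j \<and> inv g ` Mf j \<subseteq> Mf j)}"

text \<open>Only meaningful (and only used) for i >= 1.\<close>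
definition GL_i :: "('k::comm_ring_1 \<Rightarrow> 'm::ab_group_add \<Rightarrow> 'm) \<Rightarrow> (nat \<Rightarrow> 'm set) \<Rightarrow> nat \<Rightarrow> ('m \<Rightarrow> 'm) set" where
  "GL_i sc Mf i = {g \<in> GL0 sc Mf. (\<lambda>x. g x - x) \<in> End_i sc Mf i \<and> (\<lambda>x. inv g x - x) \<in> End_i sc Mf i}"

definition is_subgroup_fun :: "('m \<Rightarrow> 'm) set \<Rightarrow> ('m \<Rightarrow> 'm) set \<Rightarrow> bool" where
  "is_subgroup_fun H K \<longleftrightarrow> H \<subseteq> K \<and> id \<in> H \<and> (\<forall>g\<in>H. \<forall>h\<in>H. g \<circ> h \<in> H) \<and> (\<forall>g\<in>H. inv g \<in> H)"

definition is_submodule_End :: "('k::comm_ring_1 \<Rightarrow> 'm::ab_group_add \<Rightarrow> 'm) \<Rightarrow> ('m \<Rightarrow> 'm) set \<Rightarrow> ('m \<Rightarrow> 'm) set \<Rightarrow> bool" where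
  "is_submodule_End sc T K \<longleftrightarrow> T \<subseteq> K \<and> (\<lambda>x. 0) \<in> T \<and> (\<forall>\<phi>\<in>T. \<forall>\<psi>\<in>T. (\<lambda>x. \<phi> x + \<psi> x) \<in> T)
     \<and> (\<forall>c. \<forall>\<phi>\<in>T. (\<lambda>x. sc c (\<phi> x)) \<in> T)"

definition fclosure :: "(nat \<Rightarrow> 'm::ab_group_add set) \<Rightarrow> 'm set \<Rightarrow> 'm set" where
  "fclosure Mf X = (\<Inter>j\<in>{1..}. {y + m | y m. y \<in> X \<and> m \<in> Mf j})"

end

theory Submission
  imports Defs
begin

lemma filt_sub:
  assumes "filtration sc Mf"
  shows "module.subspace sc (Mf j)"
  using assms unfolding filtration_def by blast

lemma filt_add: "module sc \<Longrightarrow> filtration sc Mf \<Longrightarrow> x \<in> Mf j \<Longrightarrow> y \<in> Mf j \<Longrightarrow> x + y \<in> Mf j"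
  using filt_sub module.subspace_add by metis

lemma filt_diff: "module sc \<Longrightarrow> filtration sc Mf \<Longrightarrow> x \<in> Mf j \<Longrightarrow> y \<in> Mf j \<Longrightarrow> x - y \<in> Mf j"
  using filt_sub module.subspace_diff by metis

lemma filt_neg: "module sc \<Longrightarrow> filtration sc Mf \<Longrightarrow> x \<in> Mf j \<Longrightarrow> - x \<in> Mf j"
  using filt_sub module.subspace_neg by metis

lemma filt_0: "module sc \<Longrightarrow> filtration sc Mf \<Longrightarrow> 0 \<in> Mf j"
  using filt_sub module.subspace_0 by metis

lemma filt_mono: "filtration sc Mf \<Longrightarrow> j \<le> k \<Longrightarrow> Mf k \<subseteq> Mf j"
proof (induction k)
  case 0 then show ?case by simp
next
  case (Suc k)
  then show ?case unfolding filtration_def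
    by (metis dual_order.trans le_Suc_eq order_refl)
qed

lemma ord_ge: "x \<in> Mf k \<Longrightarrow> enat k \<le> ord Mf x"
  unfolding ord_def by (simp add: Sup_upper)

lemma ord_gt:
  assumes "filtration sc Mf" "enat k < ord Mf x"
  shows "x \<in> Mf (Suc k)"
proof (rule ccontr)
  assume n: "x \<notin> Mf (Suc k)"
  have "\<forall>j\<in>{j. x \<in> Mf j}. enat j \<le> enat k"
  proof
    fix j assume "j \<in> {j. x \<in> Mf j}"
    hence "x \<in> Mf j" by simp
    show "enat j \<le> enat k"
    proof (rule ccontr)
      assume "\<not> enat j \<le> enat k"
      hence "Suc k \<le> j" by simp
      thus False using filt_mono[OF assms(1)] n \<open>x \<in> Mf j\<close> by blast
    qed
  qed
  hence "ord Mf x \<le> enat k" unfolding ord_def by (auto intro: Sup_least)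
  thus False using assms(2) by simp
qed

lemma fclos_mem: "x \<in> fclosure Mf X \<Longrightarrow> 1 \<le> j \<Longrightarrow> \<exists>y\<in>X. \<exists>m\<in>Mf j. x = y + m"
  unfolding fclosure_def by blast

lemma fclos_intro: "(\<And>j. 1 \<le> j \<Longrightarrow> \<exists>y\<in>X. \<exists>m\<in>Mf j. x = y + m) \<Longrightarrow> x \<in> fclosure Mf X"
  unfolding fclosure_def by blast

theorem theorem4p1:
  fixes sc :: "'k::comm_ring_1 \<Rightarrow> 'm::ab_group_add \<Rightarrow> 'm"
    and Mf :: "nat \<Rightarrow> 'm set"
    and G1 T :: "('m \<Rightarrow> 'm) set"
    and i :: nat
  assumes "module sc"
    and "filtration sc Mf"
    and "is_subgroup_fun G1 (GL_i sc Mf 1)"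
    and "is_submodule_End sc T (End_i sc Mf 1)"
    and "i \<ge> 1"
    and lie_a: "\<forall>\<xi>\<in>T \<inter> End_i sc Mf i. \<forall>z. \<exists>g\<in>G1 \<inter> GL_i sc Mf i.
                 ord Mf (\<xi> z) < \<infinity> \<longrightarrow> ord Mf (g z - z - \<xi> z) > ord Mf (\<xi> z)"
    and lie_b: "\<forall>g\<in>G1 \<inter> GL_i sc Mf i. \<forall>z. \<exists>\<xi>\<in>T \<inter> End_i sc Mf i.
                 ord Mf (g z - z) < \<infinity> \<longrightarrow> ord Mf (g z - z - \<xi> z) > ord Mf (g z - z)"
  shows "\<forall>z. \<forall>N::nat.
           Mf (N + 1) \<subseteq> fclosure Mf {\<xi> z | \<xi>. \<xi> \<in> T \<inter> End_i sc Mf i}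
           \<longleftrightarrow> {z + m | m. m \<in> Mf (N + 1)} \<subseteq> fclosure Mf {g z | g. g \<in> G1 \<inter> GL_i sc Mf i}"
proof (intro allI)
  fix z :: 'm and N :: nat
  note md = assms(1) and fl = assms(2)
  define TI where "TI = T \<inter> End_i sc Mf i"
  define GI where "GI = G1 \<inter> GL_i sc Mf i"
  have sg: "G1 \<subseteq> GL_i sc Mf 1" "id \<in> G1" "\<And>g h. g \<in> G1 \<Longrightarrow> h \<in> G1 \<Longrightarrow> g \<circ> h \<in> G1"
    using assms(3) unfolding is_subgroup_fun_def by auto
  have sm: "T \<subseteq> End_i sc Mf 1" "(\<lambda>x. 0) \<in> T" "\<And>\<phi> \<psi>. \<phi> \<in> T \<Longrightarrow> \<psi> \<in> T \<Longrightarrow> (\<lambda>x. \<phi> x + \<psi> x) \<in> T"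
    using assms(4) unfolding is_submodule_End_def by auto
  have G1GL0: "g \<in> GL0 sc Mf" if "g \<in> G1" for g
    using that sg(1) unfolding GL_i_def by auto
  have G1End: "(\<lambda>x. g x - x) \<in> End_k sc" "(\<lambda>x. inv g x - x) \<in> End_k sc" if "g \<in> G1" for g
    using that sg(1) unfolding GL_i_def End_i_def by auto
  have TEnd: "\<phi> \<in> End_k sc" if "\<phi> \<in> T" for \<phi>
    using that sm(1) unfolding End_i_def by auto
  have GIpres: "g x \<in> Mf j" if "g \<in> GI" "x \<in> Mf j" for g x j
    using that G1GL0 unfolding GI_def GL0_def by auto
  have GIdiff: "g x - x \<in> Mf (j + i)" if "g \<in> GI" "x \<in> Mf j" for g x j
    using that unfolding GI_def GL_i_def End_i_def by auto
  have GIadd: "g (a + b) = g a + g b" if "g \<in> GI" for g a b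
  proof -
    have "module_hom sc sc (\<lambda>x. g x - x)" using G1End(1)[of g] that unfolding GI_def End_k_def by auto
    hence "g (a + b) - (a + b) = (g a - a) + (g b - b)" using module_hom.add by fastforce
    thus ?thesis by (simp add: algebra_simps)
  qed
  have id_GI: "id \<in> GI"
  proof -
    have "id \<in> GL0 sc Mf" using G1GL0 sg(2) by auto
    moreover have "(\<lambda>x. id x - x) \<in> End_i sc Mf i"
      using TEnd[OF sm(2)] filt_0[OF md fl] unfolding End_i_def by auto
    ultimately show ?thesis unfolding GI_def GL_i_def using sg(2) by (simp add: inv_id)
  qed
  have comp_GI: "g \<circ> h \<in> GI" if "g \<in> GI" "h \<in> GI" for g h
  proof -
    have gh: "g \<circ> h \<in> G1" using that sg(3) unfolding GI_def by auto
    have bg: "bij g" "bij h" using that G1GL0 unfolding GI_def GL0_def by auto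
    have ig: "inv (g \<circ> h) = inv h \<circ> inv g" using bg by (simp add: o_inv_distrib)
    have A: "(\<lambda>x. (g \<circ> h) x - x) \<in> End_i sc Mf i"
      unfolding End_i_def
    proof (intro CollectI conjI allI)
      show "(\<lambda>x. (g \<circ> h) x - x) \<in> End_k sc" using G1End(1)[OF gh] .
      fix j
      show "(\<lambda>x. (g \<circ> h) x - x) ` Mf j \<subseteq> Mf (j + i)"
      proof
        fix y assume "y \<in> (\<lambda>x. (g \<circ> h) x - x) ` Mf j"
        then obtain x where x: "x \<in> Mf j" "y = g (h x) - x" by auto
        have "g (h x) - h x \<in> Mf (j + i)" using GIdiff[OF that(1) GIpres[OF that(2) x(1)]] .
        moreover have "h x - x \<in> Mf (j + i)" using GIdiff[OF that(2) x(1)] .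
        ultimately have "(g (h x) - h x) + (h x - x) \<in> Mf (j + i)" using filt_add[OF md fl] by blast
        thus "y \<in> Mf (j + i)" using x by simp
      qed
    qed
    have ipres: "inv g x \<in> Mf j" "inv h x \<in> Mf j" if "x \<in> Mf j" for x j
      using \<open>g \<in> GI\<close> \<open>h \<in> GI\<close> G1GL0 that unfolding GI_def GL0_def by blast+
    have idiff: "inv g x - x \<in> Mf (j + i)" "inv h x - x \<in> Mf (j + i)" if "x \<in> Mf j" for x j
      using \<open>g \<in> GI\<close> \<open>h \<in> GI\<close> that unfolding GI_def GL_i_def End_i_def by blast+
    have B: "(\<lambda>x. inv (g \<circ> h) x - x) \<in> End_i sc Mf i"
      unfolding End_i_def
    proof (intro CollectI conjI allI)
      show "(\<lambda>x. inv (g \<circ> h) x - x) \<in> End_k sc" using G1End(2)[OF gh] .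
      fix j
      show "(\<lambda>x. inv (g \<circ> h) x - x) ` Mf j \<subseteq> Mf (j + i)"
      proof
        fix y assume "y \<in> (\<lambda>x. inv (g \<circ> h) x - x) ` Mf j"
        then obtain x where x: "x \<in> Mf j" "y = inv h (inv g x) - x" using ig by auto
        have "inv h (inv g x) - inv g x \<in> Mf (j + i)" using idiff(2)[OF ipres(1)[OF x(1)]] .
        moreover have "inv g x - x \<in> Mf (j + i)" using idiff(1)[OF x(1)] .
        ultimately have "(inv h (inv g x) - inv g x) + (inv g x - x) \<in> Mf (j + i)" using filt_add[OF md fl] by blast
        thus "y \<in> Mf (j + i)" using x by simp
      qed
    qed
    show ?thesis using gh G1GL0[OF gh] A B unfolding GI_def GL_i_def by simp
  qed
  have zero_TI: "(\<lambda>x. 0) \<in> TI"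
    using sm(2) TEnd[OF sm(2)] filt_0[OF md fl] unfolding TI_def End_i_def by auto
  have add_TI: "(\<lambda>x. \<phi> x + \<psi> x) \<in> TI" if "\<phi> \<in> TI" "\<psi> \<in> TI" for \<phi> \<psi>
  proof -
    have T: "(\<lambda>x. \<phi> x + \<psi> x) \<in> T" using that sm(3) unfolding TI_def by auto
    moreover have "(\<lambda>x. \<phi> x + \<psi> x) ` Mf j \<subseteq> Mf (j + i)" for j
      using that filt_add[OF md fl] unfolding TI_def End_i_def by blast
    ultimately show ?thesis using TEnd[OF T] unfolding TI_def End_i_def by auto
  qed
  have mono: "Mf k \<subseteq> Mf j" if "j \<le> k" for j k using filt_mono[OF fl that] .
  show "Mf (N + 1) \<subseteq> fclosure Mf {\<xi> z | \<xi>. \<xi> \<in> T \<inter> End_i sc Mf i}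
           \<longleftrightarrow> {z + m | m. m \<in> Mf (N + 1)} \<subseteq> fclosure Mf {g z | g. g \<in> G1 \<inter> GL_i sc Mf i}"
    unfolding TI_def[symmetric] GI_def[symmetric]
  proof
    assume L: "Mf (N + 1) \<subseteq> fclosure Mf {\<xi> z | \<xi>. \<xi> \<in> TI}"
    have stepA: "\<exists>h\<in>GI. h z - z - r \<in> Mf (Suc k)" if "r \<in> Mf k" "N + 1 \<le> k" for r k
    proof -
      have "r \<in> Mf (N + 1)" using that mono by blast
      hence "r \<in> fclosure Mf {\<xi> z | \<xi>. \<xi> \<in> TI}" using L by blast
      from fclos_mem[OF this, of "Suc k"] obtain \<xi> m' where
        xm: "\<xi> \<in> TI" "m' \<in> Mf (Suc k)" "r = \<xi> z + m'" by auto
      have e: "\<xi> z - r \<in> Mf (Suc k)" using xm filt_neg[OF md fl] by (simp add: algebra_simps)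
      have xk: "\<xi> z \<in> Mf k" using xm(3) xm(2) that(1) mono[of k "Suc k"] filt_diff[OF md fl]
        by (metis add_diff_cancel_right' le_SucI order_refl subsetD)
      show ?thesis
      proof (cases "ord Mf (\<xi> z) < \<infinity>")
        case True
        obtain h where h: "h \<in> GI" "ord Mf (h z - z - \<xi> z) > ord Mf (\<xi> z)"
          using lie_a xm(1) True unfolding TI_def GI_def by blast
        have "enat k < ord Mf (h z - z - \<xi> z)" using h(2) ord_ge[of "\<xi> z" Mf k, OF xk] by simp
        hence "h z - z - \<xi> z \<in> Mf (Suc k)" using ord_gt[OF fl] by blast
        hence "(h z - z - \<xi> z) + (\<xi> z - r) \<in> Mf (Suc k)" using e filt_add[OF md fl] by blast
        thus ?thesis using h(1) by (auto simp: algebra_simps)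
      next
        case False
        hence "\<xi> z \<in> Mf (Suc k)" using ord_gt[OF fl, of k] by simp
        hence "\<xi> z - (\<xi> z - r) \<in> Mf (Suc k)" using e filt_diff[OF md fl] by blast
        hence "- r \<in> Mf (Suc k)" using filt_neg[OF md fl] by simp
        thus ?thesis using id_GI by (intro bexI[of _ id]) auto
      qed
    qed
    show "{z + m | m. m \<in> Mf (N + 1)} \<subseteq> fclosure Mf {g z | g. g \<in> GI}"
    proof
      fix x assume "x \<in> {z + m | m. m \<in> Mf (N + 1)}"
      then obtain m where m: "m \<in> Mf (N + 1)" "x = z + m" by auto
      have P: "\<exists>g\<in>GI. z + m - g z \<in> Mf (K + (N + 1))" for K
      proof (induction K)
        case 0 then show ?case using id_GI m(1) by (intro bexI[of _ id]) auto
      next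
        case (Suc K)
        then obtain g where g: "g \<in> GI" "z + m - g z \<in> Mf (K + (N + 1))" by blast
        define r where "r = z + m - g z"
        obtain h where h: "h \<in> GI" "h z - z - r \<in> Mf (Suc (K + (N + 1)))"
          using stepA[of r "K + (N + 1)"] g(2) unfolding r_def by auto
        define e where "e = h z - z - r"
        have hz: "h z = z + r + e" unfolding e_def by simp
        have "g (h z) = g z + g r + g e" using hz GIadd[OF g(1)] by simp
        hence "z + m - g (h z) = - (g r - r) - g e" unfolding r_def by (simp add: algebra_simps)
        moreover have "g r - r \<in> Mf (Suc (K + (N + 1)))"
          using GIdiff[OF g(1) g(2)[folded r_def]] mono[of "Suc (K + (N + 1))" "K + (N + 1) + i"] assms(5)
          by auto
        moreover have "g e \<in> Mf (Suc (K + (N + 1)))" using GIpres[OF g(1)] h(2) e_def by blast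
        ultimately have "z + m - g (h z) \<in> Mf (Suc (K + (N + 1)))"
          using filt_diff[OF md fl] filt_neg[OF md fl] by metis
        thus ?case using comp_GI[OF g(1) h(1)] by (intro bexI[of _ "g \<circ> h"]) auto
      qed
      show "x \<in> fclosure Mf {g z | g. g \<in> GI}"
      proof (rule fclos_intro)
        fix j :: nat assume "1 \<le> j"
        obtain g where g: "g \<in> GI" "z + m - g z \<in> Mf (j + (N + 1))" using P by blast
        hence "z + m - g z \<in> Mf j" using mono[of j "j + (N + 1)"] by auto
        thus "\<exists>y\<in>{g z | g. g \<in> GI}. \<exists>m'\<in>Mf j. x = y + m'"
          using g(1) m(2) by (intro bexI[of _ "g z"] bexI[of _ "z + m - g z"]) auto
      qed
    qed
  next
    assume R: "{z + m | m. m \<in> Mf (N + 1)} \<subseteq> fclosure Mf {g z | g. g \<in> GI}"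
    have stepB: "\<exists>\<xi>\<in>TI. s - \<xi> z \<in> Mf (Suc k)" if "s \<in> Mf k" "N + 1 \<le> k" for s k
    proof -
      have "s \<in> Mf (N + 1)" using that mono by blast
      hence "z + s \<in> fclosure Mf {g z | g. g \<in> GI}" using R by blast
      from fclos_mem[OF this, of "Suc k"] obtain g m' where
        gm: "g \<in> GI" "m' \<in> Mf (Suc k)" "z + s = g z + m'" by auto
      have e: "g z - z = s - m'" using gm(3) by (simp add: algebra_simps)
      have m'k: "m' \<in> Mf k" using gm(2) mono[of k "Suc k"] by auto
      have gk: "g z - z \<in> Mf k" using e that(1) m'k filt_diff[OF md fl] by simp
      show ?thesis
      proof (cases "ord Mf (g z - z) < \<infinity>")
        case True
        obtain \<xi> where xi: "\<xi> \<in> TI" "ord Mf (g z - z - \<xi> z) > ord Mf (g z - z)"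
          using lie_b gm(1) True unfolding TI_def GI_def by blast
        have "enat k < ord Mf (g z - z - \<xi> z)" using xi(2) ord_ge[of "g z - z" Mf k, OF gk] by simp
        hence "g z - z - \<xi> z \<in> Mf (Suc k)" using ord_gt[OF fl] by blast
        hence "(g z - z - \<xi> z) + m' \<in> Mf (Suc k)" using gm(2) filt_add[OF md fl] by blast
        thus ?thesis using xi(1) e by (intro bexI[of _ \<xi>]) (auto simp: algebra_simps)
      next
        case False
        hence "g z - z \<in> Mf (Suc k)" using ord_gt[OF fl, of k] by simp
        hence "(g z - z) + m' \<in> Mf (Suc k)" using gm(2) filt_add[OF md fl] by blast
        thus ?thesis using zero_TI e by (intro bexI[of _ "\<lambda>x. 0"]) auto
      qed
    qed
    show "Mf (N + 1) \<subseteq> fclosure Mf {\<xi> z | \<xi>. \<xi> \<in> TI}"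
    proof
      fix r assume r: "r \<in> Mf (N + 1)"
      have P: "\<exists>\<xi>\<in>TI. r - \<xi> z \<in> Mf (K + (N + 1))" for K
      proof (induction K)
        case 0 then show ?case using zero_TI r by (intro bexI[of _ "\<lambda>x. 0"]) auto
      next
        case (Suc K)
        then obtain \<xi> where x: "\<xi> \<in> TI" "r - \<xi> z \<in> Mf (K + (N + 1))" by blast
        obtain \<xi>' where x': "\<xi>' \<in> TI" "r - \<xi> z - \<xi>' z \<in> Mf (Suc (K + (N + 1)))"
          using stepB[OF x(2)] by auto
        thus ?case using add_TI[OF x(1) x'(1)]
          by (intro bexI[of _ "\<lambda>x. \<xi> x + \<xi>' x"]) (auto simp: algebra_simps)
      qed
      show "r \<in> fclosure Mf {\<xi> z | \<xi>. \<xi> \<in> TI}"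
      proof (rule fclos_intro)
        fix j :: nat assume "1 \<le> j"
        obtain \<xi> where x: "\<xi> \<in> TI" "r - \<xi> z \<in> Mf (j + (N + 1))" using P by blast
        hence "r - \<xi> z \<in> Mf j" using mono[of j "j + (N + 1)"] by auto
        thus "\<exists>y\<in>{\<xi> z | \<xi>. \<xi> \<in> TI}. \<exists>m'\<in>Mf j. r = y + m'"
          using x(1) by (intro bexI[of _ "\<xi> z"] bexI[of _ "r - \<xi> z"]) auto
      qed
    qed
  qed
qed

end
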